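(* Let $\mathcal{H}$ be a right quaternionic Hilbert space and let $T_1,T_2\in\mathcal{B}_R(\mathcal{H})$ be normal operators. If $S\in\mathcal{B}_R(\mathcal{H})$ satisfies $T_1S=ST_2$, then $T_1^*S=ST_2^*$.
   Context: $\mathcal{H}$ is a right quaternionic Hilbert space (a right vector space over the quaternions $\mathbb{H}$ with a Hermitian quaternionic scalar product $\langle\cdot,\cdot\rangle$, right linear in the first argument, $\overline{\langle x,y\rangle}=\langle y,x\rangle$, positive definite, complete). $\mathcal{B}_R(\mathcal{H})$ is the set of bounded right linear operators $T$ on $\mathcal{H}$ ($T(xq+y)=(Tx)q+Ty$), $T^*$ is the adjoint ($\langle Tx,y\rangle=\langle x,T^*y\rangle$), and $T$ is normal if $TT^*=T^*T$. *)

theory Defs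
  imports "HOL-Analysis.Analysis"
begin

datatype quat = Quat (qRe: real) (qI: real) (qJ: real) (qK: real)

instantiation quat :: "{zero, one, plus, minus, uminus, times}"
begin
definition "0 = Quat 0 0 0 0"
definition "1 = Quat 1 0 0 0"
definition "p + q = Quat (qRe p + qRe q) (qI p + qI q) (qJ p + qJ q) (qK p + qK q)"
definition "p - q = Quat (qRe p - qRe q) (qI p - qI q) (qJ p - qJ q) (qK p - qK q)"
definition "- q = Quat (- qRe q) (- qI q) (- qJ q) (- qK q)"
definition "p * q = Quat
   (qRe p * qRe q - qI p * qI q - qJ p * qJ q - qK p * qK q)
   (qRe p * qI q + qI p * qRe q + qJ p * qK q - qK p * qJ q)
   (qRe p * qJ q - qI p * qK q + qJ p * qRe q + qK p * qI q)
   (qRe p * qK q + qI p * qJ q - qJ p * qI q + qK p * qRe q)"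
instance ..
end

definition qcnj :: "quat \<Rightarrow> quat" where
  "qcnj q = Quat (qRe q) (- qI q) (- qJ q) (- qK q)"

definition qnorm :: "('h \<Rightarrow> 'h \<Rightarrow> quat) \<Rightarrow> 'h \<Rightarrow> real" where
  "qnorm ip x = sqrt (qRe (ip x x))"

text \<open>smul x q is the right scalar multiplication x q; ip is the scalar product,
  right linear in the first argument.\<close>
definition right_quat_hilbert ::
  "('h::ab_group_add \<Rightarrow> quat \<Rightarrow> 'h) \<Rightarrow> ('h \<Rightarrow> 'h \<Rightarrow> quat) \<Rightarrow> bool" where
  "right_quat_hilbert smul ip \<longleftrightarrow>
     \<comment> \<open>right vector space over H\<close>
     (\<forall>x y q. smul (x + y) q = smul x q + smul y q) \<and>
     (\<forall>x p q. smul x (p + q) = smul x p + smul x q) \<and>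
     (\<forall>x p q. smul x (p * q) = smul (smul x p) q) \<and>
     (\<forall>x. smul x 1 = x) \<and>
     \<comment> \<open>Hermitian quaternionic scalar product\<close>
     (\<forall>x y z q. ip (smul x q + y) z = ip x z * q + ip y z) \<and>
     (\<forall>x y. qcnj (ip x y) = ip y x) \<and>
     (\<forall>x. qI (ip x x) = 0 \<and> qJ (ip x x) = 0 \<and> qK (ip x x) = 0 \<and> qRe (ip x x) \<ge> 0) \<and>
     (\<forall>x. ip x x = 0 \<longrightarrow> x = 0) \<and>
     \<comment> \<open>completeness w.r.t. the induced norm\<close>
     (\<forall>X :: nat \<Rightarrow> 'h.
        (\<forall>e>0. \<exists>N. \<forall>m\<ge>N. \<forall>n\<ge>N. qnorm ip (X m - X n) < e) \<longrightarrow>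
        (\<exists>L. (\<lambda>n. qnorm ip (X n - L)) \<longlonglongrightarrow> 0))"

definition bounded_right_linear ::
  "('h::ab_group_add \<Rightarrow> quat \<Rightarrow> 'h) \<Rightarrow> ('h \<Rightarrow> 'h \<Rightarrow> quat) \<Rightarrow> ('h \<Rightarrow> 'h) \<Rightarrow> bool" where
  "bounded_right_linear smul ip T \<longleftrightarrow>
     (\<forall>x y q. T (smul x q + y) = smul (T x) q + T y) \<and>
     (\<exists>C. \<forall>x. qnorm ip (T x) \<le> C * qnorm ip x)"

definition qadjoint :: "('h \<Rightarrow> 'h \<Rightarrow> quat) \<Rightarrow> ('h \<Rightarrow> 'h) \<Rightarrow> ('h \<Rightarrow> 'h)" where
  "qadjoint ip T = (THE A. \<forall>x y. ip (T x) y = ip x (A y))"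

definition qnormal :: "('h \<Rightarrow> 'h \<Rightarrow> quat) \<Rightarrow> ('h \<Rightarrow> 'h) \<Rightarrow> bool" where
  "qnormal ip T \<longleftrightarrow> T \<circ> qadjoint ip T = qadjoint ip T \<circ> T"

end

theory Submission
  imports Defs "HOL-Complex_Analysis.Complex_Analysis" "HOL-Library.Nat_Bijection"
begin

lemma quat_eqI: "qRe p = qRe q \<Longrightarrow> qI p = qI q \<Longrightarrow> qJ p = qJ q \<Longrightarrow> qK p = qK q \<Longrightarrow> p = q"
  by (cases p; cases q) auto

lemma quat_sel [simp]:
  "qRe 0 = 0" "qI 0 = 0" "qJ 0 = 0" "qK 0 = 0"
  "qRe 1 = 1" "qI 1 = 0" "qJ 1 = 0" "qK 1 = 0"
  "qRe (p + q) = qRe p + qRe q" "qI (p + q) = qI p + qI q" "qJ (p + q) = qJ p + qJ q" "qK (p + q) = qK p + qK q"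
  "qRe (p - q) = qRe p - qRe q" "qI (p - q) = qI p - qI q" "qJ (p - q) = qJ p - qJ q" "qK (p - q) = qK p - qK q"
  "qRe (- q) = - qRe q" "qI (- q) = - qI q" "qJ (- q) = - qJ q" "qK (- q) = - qK q"
  "qRe (p * q) = qRe p * qRe q - qI p * qI q - qJ p * qJ q - qK p * qK q"
  "qI (p * q) = qRe p * qI q + qI p * qRe q + qJ p * qK q - qK p * qJ q"
  "qJ (p * q) = qRe p * qJ q - qI p * qK q + qJ p * qRe q + qK p * qI q"
  "qK (p * q) = qRe p * qK q + qI p * qJ q - qJ p * qI q + qK p * qRe q"
  "qRe (qcnj q) = qRe q" "qI (qcnj q) = - qI q" "qJ (qcnj q) = - qJ q" "qK (qcnj q) = - qK q"
  unfolding zero_quat_def one_quat_def plus_quat_def minus_quat_def uminus_quat_def times_quat_def qcnj_def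
  by simp_all

lemma qmult_assoc: "(a::quat) * b * c = a * (b * c)"
  by (rule quat_eqI) (simp_all add: algebra_simps)

instance quat :: ring_1
proof
  fix a b c :: quat
  show "a * b * c = a * (b * c)" by (rule qmult_assoc)
  show "a + b + c = a + (b + c)" by (rule quat_eqI) simp_all
  show "a + b = b + a" by (rule quat_eqI) simp_all
  show "0 + a = a" by (rule quat_eqI) simp_all
  show "- a + a = 0" by (rule quat_eqI) simp_all
  show "a - b = a + - b" by (rule quat_eqI) simp_all
  show "(a + b) * c = a * c + b * c" by (rule quat_eqI) (simp_all add: algebra_simps)
  show "a * (b + c) = a * b + a * c" by (rule quat_eqI) (simp_all add: algebra_simps)
  show "1 * a = a" by (rule quat_eqI) simp_all
  show "a * 1 = a" by (rule quat_eqI) simp_all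
  show "(0::quat) \<noteq> 1" by (metis quat_sel(1,5) zero_neq_one)
qed

lemma qcnj_mult: "qcnj (p * q) = qcnj q * qcnj p"
  by (rule quat_eqI) (simp_all add: algebra_simps)
lemma qcnj_add: "qcnj (p + q) = qcnj p + qcnj q"
  by (rule quat_eqI) simp_all
lemma qcnj_diff: "qcnj (p - q) = qcnj p - qcnj q"
  by (rule quat_eqI) simp_all
lemma qcnj_qcnj [simp]: "qcnj (qcnj p) = p"
  by (rule quat_eqI) simp_all
lemma qcnj_0 [simp]: "qcnj 0 = 0"
  by (rule quat_eqI) simp_all
lemma qRe_mult_comm: "qRe (p * q) = qRe (q * p)"
  by (simp add: algebra_simps)


definition qr :: "real \<Rightarrow> quat" where "qr c = Quat c 0 0 0"
definition cq :: "complex \<Rightarrow> quat" where "cq z = Quat (Re z) (Im z) 0 0"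

lemma qr_sel [simp]: "qRe (qr c) = c" "qI (qr c) = 0" "qJ (qr c) = 0" "qK (qr c) = 0"
  by (simp_all add: qr_def)
lemma cq_sel [simp]: "qRe (cq z) = Re z" "qI (cq z) = Im z" "qJ (cq z) = 0" "qK (cq z) = 0"
  by (simp_all add: cq_def)
lemma cq_mult: "cq (z * w) = cq z * cq w"
  by (rule quat_eqI) (simp_all add: algebra_simps)
lemma cq_comm: "cq z * cq w = cq w * cq z"
  by (rule quat_eqI) (simp_all add: algebra_simps)
lemma cq_one: "cq 1 = 1"
  by (rule quat_eqI) simp_all
lemma qr_mult: "qr (a * b) = qr a * qr b"
  by (rule quat_eqI) simp_all
lemma qr_one: "qr 1 = 1"
  by (rule quat_eqI) simp_all
lemma qr_add: "qr (a + b) = qr a + qr b"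
  by (rule quat_eqI) simp_all
lemma qr_comm: "qr a * q = q * qr a"
  by (rule quat_eqI) (simp_all add: algebra_simps)
lemma cq_qr_comm: "qr a * cq z = cq z * qr a"
  by (rule quat_eqI) (simp_all add: algebra_simps)
lemma cq_of_real: "cq (complex_of_real a) = qr a"
  by (rule quat_eqI) simp_all

lemma add_sum_gen:
  assumes "\<And>x y. f (x + y) = f x + f y" "f 0 = 0"
  shows "f (sum g I) = (\<Sum>i\<in>I. f (g i))"
  by (induction I rule: infinite_finite_induct) (auto simp: assms)

definition rlin :: "('h::ab_group_add \<Rightarrow> quat \<Rightarrow> 'h) \<Rightarrow> ('h \<Rightarrow> 'h) \<Rightarrow> bool" where
  "rlin smul T \<longleftrightarrow> (\<forall>x y q. T (smul x q + y) = smul (T x) q + T y)"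

locale qhs =
  fixes smul :: "'h::ab_group_add \<Rightarrow> quat \<Rightarrow> 'h" and ip :: "'h \<Rightarrow> 'h \<Rightarrow> quat"
  assumes H: "right_quat_hilbert smul ip"
begin

lemma HH: "(\<forall>x y q. smul (x + y) q = smul x q + smul y q) \<and>
     (\<forall>x p q. smul x (p + q) = smul x p + smul x q) \<and>
     (\<forall>x p q. smul x (p * q) = smul (smul x p) q) \<and>
     (\<forall>x. smul x 1 = x) \<and>
     (\<forall>x y z q. ip (smul x q + y) z = ip x z * q + ip y z) \<and>
     (\<forall>x y. qcnj (ip x y) = ip y x) \<and>
     (\<forall>x. qI (ip x x) = 0 \<and> qJ (ip x x) = 0 \<and> qK (ip x x) = 0 \<and> qRe (ip x x) \<ge> 0) \<and>
     (\<forall>x. ip x x = 0 \<longrightarrow> x = 0) \<and>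
     (\<forall>X :: nat \<Rightarrow> 'h.
        (\<forall>e>0. \<exists>N. \<forall>m\<ge>N. \<forall>n\<ge>N. qnorm ip (X m - X n) < e) \<longrightarrow>
        (\<exists>L. (\<lambda>n. qnorm ip (X n - L)) \<longlonglongrightarrow> 0))"
  using H unfolding right_quat_hilbert_def .

lemmas smul_add = HH[THEN conjunct1, rule_format]
lemmas smul_qadd = HH[THEN conjunct2, THEN conjunct1, rule_format]
lemmas smul_mult = HH[THEN conjunct2, THEN conjunct2, THEN conjunct1, rule_format]
lemmas smul_one [simp] = HH[THEN conjunct2, THEN conjunct2, THEN conjunct2, THEN conjunct1, rule_format]
lemmas ip_lin = HH[THEN conjunct2, THEN conjunct2, THEN conjunct2, THEN conjunct2, THEN conjunct1, rule_format]
lemmas ip_herm = HH[THEN conjunct2, THEN conjunct2, THEN conjunct2, THEN conjunct2, THEN conjunct2, THEN conjunct1, rule_format]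
lemmas ip_pos' = HH[THEN conjunct2, THEN conjunct2, THEN conjunct2, THEN conjunct2, THEN conjunct2, THEN conjunct2, THEN conjunct1, rule_format]
lemma ip_pos: "qI (ip x x) = 0" "qJ (ip x x) = 0" "qK (ip x x) = 0" "qRe (ip x x) \<ge> 0"
  using ip_pos'[of x] by simp_all
lemmas ip_def0' = HH[THEN conjunct2, THEN conjunct2, THEN conjunct2, THEN conjunct2, THEN conjunct2, THEN conjunct2, THEN conjunct2, THEN conjunct1, rule_format]
lemma ip_def0: "ip x x = 0 \<Longrightarrow> x = 0" using ip_def0' by blast
lemmas complete = HH[THEN conjunct2, THEN conjunct2, THEN conjunct2, THEN conjunct2, THEN conjunct2, THEN conjunct2, THEN conjunct2, THEN conjunct2, rule_format]

lemma smul_zero [simp]: "smul 0 q = 0"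
  using smul_add[of 0 0 q] by simp
lemma smul_qzero [simp]: "smul x 0 = 0"
  using smul_qadd[of x 0 0] by simp
lemma smul_minus: "smul (- x) q = - smul x q"
proof -
  have "smul (- x) q + smul x q = 0" by (simp add: smul_add[symmetric])
  then show ?thesis by (simp add: eq_neg_iff_add_eq_0)
qed
lemma smul_diff: "smul (x - y) q = smul x q - smul y q"
  using smul_add[of x "- y" q] by (simp add: smul_minus)

lemma ip_add_l: "ip (x + y) z = ip x z + ip y z"
  using ip_lin[of x 1 y z] by simp
lemma ip_zero_l [simp]: "ip 0 z = 0"
  using ip_add_l[of 0 0 z] by simp
lemma ip_smul_l: "ip (smul x q) z = ip x z * q"
  using ip_lin[of x q 0 z] by simp
lemma ip_add_r: "ip z (x + y) = ip z x + ip z y"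
proof -
  have "ip z (x + y) = qcnj (ip (x + y) z)" by (simp add: ip_herm)
  also have "\<dots> = ip z x + ip z y" by (simp add: ip_add_l qcnj_add ip_herm)
  finally show ?thesis .
qed
lemma ip_zero_r [simp]: "ip z 0 = 0"
  using ip_add_r[of z 0 0] by simp
lemma ip_smul_r: "ip z (smul x q) = qcnj q * ip z x"
proof -
  have "ip z (smul x q) = qcnj (ip (smul x q) z)" by (simp add: ip_herm)
  also have "\<dots> = qcnj q * ip z x" by (simp add: ip_smul_l qcnj_mult ip_herm)
  finally show ?thesis .
qed
lemma ip_minus_l: "ip (- x) z = - ip x z"
proof -
  have "ip (- x) z + ip x z = 0" by (simp add: ip_add_l[symmetric])
  then show ?thesis by (simp add: eq_neg_iff_add_eq_0)
qed
lemma ip_minus_r: "ip z (- x) = - ip z x"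
proof -
  have "ip z (- x) + ip z x = 0" by (simp add: ip_add_r[symmetric])
  then show ?thesis by (simp add: eq_neg_iff_add_eq_0)
qed
lemma ip_diff_l: "ip (x - y) z = ip x z - ip y z"
  using ip_add_l[of x "- y" z] by (simp add: ip_minus_l)
lemma ip_diff_r: "ip z (x - y) = ip z x - ip z y"
  using ip_add_r[of z x "- y"] by (simp add: ip_minus_r)

definition ri :: "'h \<Rightarrow> 'h \<Rightarrow> real" where "ri x y = qRe (ip x y)"
definition nrm :: "'h \<Rightarrow> real" where "nrm x = qnorm ip x"
definition rs :: "real \<Rightarrow> 'h \<Rightarrow> 'h" where "rs c x = smul x (qr c)"
definition M :: "complex \<Rightarrow> 'h \<Rightarrow> 'h" where "M z x = smul x (cq z)"
definition cip :: "'h \<Rightarrow> 'h \<Rightarrow> complex" where "cip u y = Complex (qRe (ip u y)) (qI (ip u y))"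

lemma ip_self: "ip x x = qr (ri x x)"
  by (rule quat_eqI) (simp_all add: ri_def ip_pos)

lemma ri_add_l: "ri (x + y) z = ri x z + ri y z" by (simp add: ri_def ip_add_l)
lemma ri_add_r: "ri z (x + y) = ri z x + ri z y" by (simp add: ri_def ip_add_r)
lemma ri_diff_l: "ri (x - y) z = ri x z - ri y z" by (simp add: ri_def ip_diff_l)
lemma ri_diff_r: "ri z (x - y) = ri z x - ri z y" by (simp add: ri_def ip_diff_r)
lemma ri_minus_l: "ri (- x) z = - ri x z" by (simp add: ri_def ip_minus_l)
lemma ri_minus_r: "ri z (- x) = - ri z x" by (simp add: ri_def ip_minus_r)
lemma ri_zero [simp]: "ri 0 z = 0" "ri z 0 = 0" by (simp_all add: ri_def)
lemma ri_sym: "ri x y = ri y x"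
proof -
  have "ri x y = qRe (qcnj (ip x y))" by (simp add: ri_def)
  then show ?thesis by (simp add: ip_herm ri_def)
qed
lemma ri_rs_l: "ri (rs c x) y = c * ri x y" by (simp add: ri_def rs_def ip_smul_l)
lemma ri_rs_r: "ri y (rs c x) = c * ri y x" by (simp add: ri_def rs_def ip_smul_r)
lemma ri_nonneg: "ri x x \<ge> 0" by (simp add: ri_def ip_pos)
lemma ri_eq0: "ri x x = 0 \<Longrightarrow> x = 0"
  by (rule ip_def0) (simp add: ip_self qr_def zero_quat_def)

lemma nrm_def2: "nrm x = sqrt (ri x x)" by (simp add: nrm_def qnorm_def ri_def)
lemma nrm_nonneg: "nrm x \<ge> 0" using ri_nonneg[of x] by (simp add: nrm_def2)
lemma nrm_sq: "nrm x ^ 2 = ri x x" using ri_nonneg[of x] by (simp add: nrm_def2)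
lemma nrm_zero [simp]: "nrm 0 = 0" by (simp add: nrm_def2)
lemma nrm_eq0: "nrm x = 0 \<Longrightarrow> x = 0" using ri_eq0 ri_nonneg by (simp add: nrm_def2)

lemma rs_add: "rs c (x + y) = rs c x + rs c y" by (simp add: rs_def smul_add)
lemma rs_one [simp]: "rs 1 x = x" by (simp add: rs_def qr_one)
lemma rs_zero [simp]: "rs 0 x = 0" "rs c 0 = 0"
  by (simp_all add: rs_def qr_def zero_quat_def[symmetric])
lemma rs_rs: "rs a (rs b x) = rs (b * a) x" by (simp add: rs_def smul_mult qr_mult)
lemma rs_radd: "rs (a + b) x = rs a x + rs b x" by (simp add: rs_def qr_add smul_qadd)
lemma rs_diff: "rs c (x - y) = rs c x - rs c y" by (simp add: rs_def smul_diff)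
lemma rs_minus: "rs c (- x) = - rs c x" by (simp add: rs_def smul_minus)

lemma cauchy_schwarz: "\<bar>ri x y\<bar> \<le> nrm x * nrm y"
proof (cases "y = 0")
  case True then show ?thesis by (simp add: nrm_nonneg)
next
  case False
  then have yy: "ri y y > 0" using ri_eq0 ri_nonneg by (metis less_eq_real_def)
  define t where "t = ri x y / ri y y"
  have "0 \<le> ri (x - rs t y) (x - rs t y)" by (rule ri_nonneg)
  also have "\<dots> = ri x x - 2 * t * ri x y + t * t * ri y y"
    by (simp add: ri_diff_l ri_diff_r ri_rs_l ri_rs_r ri_sym[of y x] algebra_simps)
  also have "\<dots> = ri x x - (ri x y)^2 / ri y y"
    using yy by (simp add: t_def field_simps power2_eq_square)
  finally have "(ri x y)^2 \<le> ri x x * ri y y"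
    using yy by (simp add: field_simps)
  then have "sqrt ((ri x y)^2) \<le> sqrt (ri x x * ri y y)" by (rule real_sqrt_le_mono)
  then show ?thesis by (simp add: nrm_def2 real_sqrt_mult)
qed

lemma nrm_triangle: "nrm (x + y) \<le> nrm x + nrm y"
proof -
  have "ri (x + y) (x + y) = ri x x + 2 * ri x y + ri y y"
    by (simp add: ri_add_l ri_add_r ri_sym[of y x])
  also have "\<dots> \<le> (nrm x)^2 + 2 * (nrm x * nrm y) + (nrm y)^2"
    using cauchy_schwarz[of x y] by (simp add: nrm_sq)
  also have "\<dots> = (nrm x + nrm y)^2" by (simp add: power2_eq_square algebra_simps)
  finally have "sqrt (ri (x + y) (x + y)) \<le> sqrt ((nrm x + nrm y)^2)" by (rule real_sqrt_le_mono)
  then show ?thesis using nrm_nonneg[of x] nrm_nonneg[of y] by (simp add: nrm_def2[of "x+y"])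
qed

lemma nrm_minus: "nrm (- x) = nrm x"
  by (simp add: nrm_def2 ri_minus_l ri_minus_r)
lemma nrm_diff: "nrm (x - y) \<le> nrm x + nrm y"
  using nrm_triangle[of x "- y"] by (simp add: nrm_minus)
lemma nrm_rev: "nrm x - nrm y \<le> nrm (x - y)"
  using nrm_triangle[of "x - y" y] by simp
lemma nrm_diff_sym: "nrm (x - y) = nrm (y - x)"
  by (metis minus_diff_eq nrm_minus)

lemma ri_smul_self: "ri (smul x q) (smul x q) = (qRe q ^ 2 + qI q ^ 2 + qJ q ^ 2 + qK q ^ 2) * ri x x"
proof -
  have "ri (smul x q) (smul x q) = qRe (qcnj q * (ip x x * q))"
    by (simp only: ri_def ip_smul_l ip_smul_r mult.assoc)
  also have "\<dots> = qRe (qcnj q * (qr (ri x x) * q))"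
    by (simp only: ip_self)
  also have "\<dots> = (qRe q ^ 2 + qI q ^ 2 + qJ q ^ 2 + qK q ^ 2) * ri x x"
    unfolding quat_sel qr_sel by (simp add: power2_eq_square ring_distribs)
  finally show ?thesis .
qed

lemma nrm_rs: "nrm (rs c x) = \<bar>c\<bar> * nrm x"
  by (simp add: nrm_def2 rs_def ri_smul_self real_sqrt_mult)
lemma nrm_M: "nrm (M z x) = cmod z * nrm x"
  by (simp add: nrm_def2 M_def ri_smul_self real_sqrt_mult cmod_def)


abbreviation "lin T \<equiv> rlin smul T"

lemma lin_add: "lin T \<Longrightarrow> T (x + y) = T x + T y"
  unfolding rlin_def by (drule spec[of _ x], drule spec[of _ y], drule spec[of _ 1]) simp
lemma lin_zero [simp]: "lin T \<Longrightarrow> T 0 = 0"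
  using lin_add[of T 0 0] by simp
lemma lin_smul: "lin T \<Longrightarrow> T (smul x q) = smul (T x) q"
proof -
  assume a: "lin T"
  then have "T 0 = 0" by simp
  with a show ?thesis unfolding rlin_def by (metis add.right_neutral)
qed
lemma lin_minus: "lin T \<Longrightarrow> T (- x) = - T x"
proof -
  assume "lin T"
  then have "T (- x) + T x = 0" by (simp add: lin_add[symmetric])
  then show ?thesis by (simp add: eq_neg_iff_add_eq_0)
qed
lemma lin_diff: "lin T \<Longrightarrow> T (x - y) = T x - T y"
  using lin_add[of T x "- y"] lin_minus[of T y] by simp
lemma lin_sum: "lin T \<Longrightarrow> T (sum g I) = (\<Sum>i\<in>I. T (g i))"
  by (rule add_sum_gen) (simp_all add: lin_add)
lemma lin_rs: "lin T \<Longrightarrow> T (rs c x) = rs c (T x)"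
  by (simp add: rs_def lin_smul)
lemma lin_M: "lin T \<Longrightarrow> T (M z x) = M z (T x)"
  by (simp add: M_def lin_smul)

lemma lin_id: "lin (\<lambda>x. x)" by (simp add: rlin_def)
lemma lin_comp: "lin T \<Longrightarrow> lin U \<Longrightarrow> lin (\<lambda>x. T (U x))"
  by (simp add: rlin_def)
lemma lin_plus: "lin T \<Longrightarrow> lin U \<Longrightarrow> lin (\<lambda>x. T x + U x)"
  unfolding rlin_def[of smul "\<lambda>x. T x + U x"]
  by (simp add: lin_add lin_smul smul_add ac_simps)
lemma lin_neg: "lin T \<Longrightarrow> lin (\<lambda>x. - T x)"
  unfolding rlin_def[of smul "\<lambda>x. - T x"]
  by (simp add: lin_add lin_smul smul_minus)
lemma lin_zero_op: "lin (\<lambda>x. 0)"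
  by (simp add: rlin_def)
lemma lin_rsop: "lin T \<Longrightarrow> lin (\<lambda>x. rs c (T x))"
  unfolding rlin_def[of smul "\<lambda>x. rs c (T x)"]
  by (simp add: lin_add lin_smul rs_def smul_add smul_mult[symmetric] qr_comm)

lemma M_add: "M z (x + y) = M z x + M z y" by (simp add: M_def smul_add)
lemma M_zero [simp]: "M z 0 = 0" by (simp add: M_def)
lemma M_M: "M z (M w x) = M (w * z) x" by (simp add: M_def smul_mult cq_mult)
lemma M_one [simp]: "M 1 x = x" by (simp add: M_def cq_one)
lemma M_real: "M (complex_of_real a) x = rs a x" by (simp add: M_def rs_def cq_of_real)
lemma M_sum: "M z (sum g I) = (\<Sum>i\<in>I. M z (g i))"
  by (rule add_sum_gen) (simp_all add: M_add)
lemma M_minus: "M z (- x) = - M z x" by (simp add: M_def smul_minus)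
lemma M_diff: "M z (x - y) = M z x - M z y" by (simp add: M_def smul_diff)
lemma M_rs: "M z (rs c x) = rs c (M z x)"
  by (simp add: M_def rs_def smul_mult[symmetric] cq_qr_comm)
lemma M_zadd: "M (z + w) x = M z x + M w x"
proof -
  have "cq (z + w) = cq z + cq w" by (rule quat_eqI) simp_all
  then show ?thesis by (simp add: M_def smul_qadd)
qed
lemma M_comm: "M z (M w x) = M w (M z x)" by (simp add: M_M mult.commute)

lemma cip_add: "cip (x + y) w = cip x w + cip y w"
  by (simp add: cip_def ip_add_l complex_eq_iff)
lemma cip_zero [simp]: "cip 0 w = 0"
  by (simp add: cip_def complex_eq_iff)
lemma cip_sum: "cip (sum g I) w = (\<Sum>i\<in>I. cip (g i) w)"
  by (rule add_sum_gen[where f = "\<lambda>u. cip u w"]) (simp_all add: cip_add)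
lemma cip_M: "cip (M z u) y = cip u y * z"
  by (simp add: cip_def M_def ip_smul_l complex_eq_iff)
lemma Re_cip: "Re (cip u y) = ri u y"
  by (simp add: cip_def ri_def)
lemma Im_cip: "Im (cip u y) = - ri (M \<i> u) y"
  by (simp add: cip_def ri_def M_def ip_smul_l)
lemma cip_bound: "cmod (cip u y) \<le> 2 * nrm u * nrm y"
proof -
  have "cmod (cip u y) \<le> \<bar>ri u y\<bar> + \<bar>ri (M \<i> u) y\<bar>"
    using cmod_le[of "cip u y"] by (simp add: Re_cip Im_cip)
  also have "\<dots> \<le> nrm u * nrm y + nrm u * nrm y"
    using cauchy_schwarz[of u y] cauchy_schwarz[of "M \<i> u" y] by (simp add: nrm_M)
  finally show ?thesis by simp
qed


end

context qhs
begin
definition opoly :: "(complex \<Rightarrow> 'h \<Rightarrow> 'h) \<Rightarrow> ('h \<Rightarrow> 'h) \<Rightarrow> ('h \<Rightarrow> 'h) \<Rightarrow> bool" where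
  "opoly F A0 A1 \<longleftrightarrow> (\<exists>(I::nat set) dg c. finite I \<and> (\<forall>i\<in>I. lin (c i)) \<and>
     (\<forall>z x. F z x = (\<Sum>i\<in>I. M (z ^ dg i) (c i x))) \<and>
     (\<forall>x. A0 x = (\<Sum>i\<in>I. if dg i = 0 then c i x else 0)) \<and>
     (\<forall>x. A1 x = (\<Sum>i\<in>I. if dg i = 1 then c i x else 0)))"

lemma opolyE:
  assumes "opoly F A0 A1"
  obtains I dg c where "finite (I::nat set)" "\<forall>i\<in>I. lin (c i)"
     "\<forall>z x. F z x = (\<Sum>i\<in>I. M (z ^ dg i) (c i x))"
     "\<forall>x. A0 x = (\<Sum>i\<in>I. if dg i = 0 then c i x else 0)"
     "\<forall>x. A1 x = (\<Sum>i\<in>I. if dg i = 1 then c i x else 0)"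
  using assms unfolding opoly_def
  apply (elim exE conjE)
  apply (rule that)
  apply assumption+
  done

lemma opoly_cong:
  assumes "opoly F A0 A1" "\<And>z x. F' z x = F z x" "\<And>x. A0' x = A0 x" "\<And>x. A1' x = A1 x"
  shows "opoly F' A0' A1'"
proof -
  obtain I dg c where h: "finite (I::nat set)" "\<forall>i\<in>I. lin (c i)"
     "\<forall>z x. F z x = (\<Sum>i\<in>I. M (z ^ dg i) (c i x))"
     "\<forall>x. A0 x = (\<Sum>i\<in>I. if dg i = 0 then c i x else 0)"
     "\<forall>x. A1 x = (\<Sum>i\<in>I. if dg i = 1 then c i x else 0)"
    by (rule opolyE[OF assms(1)])
  show ?thesis unfolding opoly_def
    apply (rule exI[of _ I], rule exI[of _ dg], rule exI[of _ c])
    apply (intro conjI allI)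
    using h apply blast
    using h apply blast
    apply (subst assms(2)) using h(3) apply blast
    apply (subst assms(3)) using h(4) apply blast
    apply (subst assms(4)) using h(5) apply blast
    done
qed

lemma opoly_const: "lin T \<Longrightarrow> opoly (\<lambda>z. T) T (\<lambda>x. 0)"
  unfolding opoly_def
  by (rule exI[of _ "{0}"], rule exI[of _ "\<lambda>i. 0"], rule exI[of _ "\<lambda>i. T"]) simp

lemma opoly_lin: "lin T \<Longrightarrow> opoly (\<lambda>z x. M z (T x)) (\<lambda>x. 0) T"
  unfolding opoly_def
  by (rule exI[of _ "{0}"], rule exI[of _ "\<lambda>i. 1"], rule exI[of _ "\<lambda>i. T"]) simp

lemma opoly_add:
  assumes "opoly F A0 A1" "opoly G B0 B1"
  shows "opoly (\<lambda>z x. F z x + G z x) (\<lambda>x. A0 x + B0 x) (\<lambda>x. A1 x + B1 x)"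
proof -
  obtain I dg c where I: "finite (I::nat set)" "\<forall>i\<in>I. lin (c i)"
    "\<forall>z x. F z x = (\<Sum>i\<in>I. M (z ^ dg i) (c i x))"
    "\<forall>x. A0 x = (\<Sum>i\<in>I. if dg i = 0 then c i x else 0)"
    "\<forall>x. A1 x = (\<Sum>i\<in>I. if dg i = 1 then c i x else 0)"
    by (rule opolyE[OF assms(1)])
  obtain J dg' c' where J: "finite (J::nat set)" "\<forall>i\<in>J. lin (c' i)"
    "\<forall>z x. G z x = (\<Sum>i\<in>J. M (z ^ dg' i) (c' i x))"
    "\<forall>x. B0 x = (\<Sum>i\<in>J. if dg' i = 0 then c' i x else 0)"
    "\<forall>x. B1 x = (\<Sum>i\<in>J. if dg' i = 1 then c' i x else 0)"
    by (rule opolyE[OF assms(2)])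
  define e1 where "e1 = (\<lambda>i::nat. 2 * i)"
  define e2 where "e2 = (\<lambda>i::nat. 2 * i + 1)"
  define K where "K = e1 ` I \<union> e2 ` J"
  define dK where "dK = (\<lambda>k. if even k then dg (k div 2) else dg' (k div 2))"
  define cK where "cK = (\<lambda>k. if even k then c (k div 2) else c' (k div 2))"
  have inj1: "inj_on e1 I" and inj2: "inj_on e2 J" by (auto simp: e1_def e2_def inj_on_def)
  have disj: "e1 ` I \<inter> e2 ` J = {}" by (auto simp: e1_def e2_def) presburger
  have sumK: "(\<Sum>k\<in>K. h k) = (\<Sum>i\<in>I. h (e1 i)) + (\<Sum>i\<in>J. h (e2 i))" for h :: "nat \<Rightarrow> 'h"
    unfolding K_def using I(1) J(1) disj
    by (simp add: sum.union_disjoint sum.reindex[OF inj1] sum.reindex[OF inj2])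
  have [simp]: "dK (e1 i) = dg i" "dK (e2 i) = dg' i" "cK (e1 i) = c i" "cK (e2 i) = c' i" for i
    by (simp_all add: dK_def cK_def e1_def e2_def)
  show ?thesis unfolding opoly_def
  proof (intro exI[of _ K] exI[of _ dK] exI[of _ cK] conjI allI ballI)
    show "finite K" using I(1) J(1) by (simp add: K_def)
    show "lin (cK k)" if "k \<in> K" for k using that I(2) J(2) by (auto simp: K_def)
  qed (simp_all add: sumK I J cong: if_cong)
qed

lemma opoly_comp:
  assumes "opoly F A0 A1" "opoly G B0 B1"
  shows "opoly (\<lambda>z x. F z (G z x)) (\<lambda>x. A0 (B0 x)) (\<lambda>x. A0 (B1 x) + A1 (B0 x))"
proof -
  obtain I dg c where I: "finite (I::nat set)" "\<forall>i\<in>I. lin (c i)"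
    "\<forall>z x. F z x = (\<Sum>i\<in>I. M (z ^ dg i) (c i x))"
    "\<forall>x. A0 x = (\<Sum>i\<in>I. if dg i = 0 then c i x else 0)"
    "\<forall>x. A1 x = (\<Sum>i\<in>I. if dg i = 1 then c i x else 0)"
    by (rule opolyE[OF assms(1)])
  obtain J dg' c' where J: "finite (J::nat set)" "\<forall>i\<in>J. lin (c' i)"
    "\<forall>z x. G z x = (\<Sum>i\<in>J. M (z ^ dg' i) (c' i x))"
    "\<forall>x. B0 x = (\<Sum>i\<in>J. if dg' i = 0 then c' i x else 0)"
    "\<forall>x. B1 x = (\<Sum>i\<in>J. if dg' i = 1 then c' i x else 0)"
    by (rule opolyE[OF assms(2)])
  define K where "K = prod_encode ` (I \<times> J)"
  define dK where "dK = (\<lambda>k. dg (fst (prod_decode k)) + dg' (snd (prod_decode k)))"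
  define cK where "cK = (\<lambda>k x. c (fst (prod_decode k)) (c' (snd (prod_decode k)) x))"
  have sumK: "(\<Sum>k\<in>K. h k) = (\<Sum>i\<in>I. \<Sum>j\<in>J. h (prod_encode (i, j)))" for h :: "nat \<Rightarrow> 'h"
    unfolding K_def
    by (simp add: sum.reindex[OF inj_prod_encode] sum.cartesian_product)
  have li: "lin (c i)" if "i \<in> I" for i using I(2) that by blast
  have lj: "lin (c' j)" if "j \<in> J" for j using J(2) that by blast
  have lc: "c i (sum g S) = (\<Sum>j\<in>S. c i (g j))" if "i \<in> I" for i and g :: "nat \<Rightarrow> 'h" and S
    by (rule lin_sum[OF li[OF that]])
  have lM: "c i (M w x) = M w (c i x)" if "i \<in> I" for i w x
    by (rule lin_M[OF li[OF that]])
  have l0: "c i 0 = 0" if "i \<in> I" for i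
    by (rule lin_zero[OF li[OF that]])
  show ?thesis unfolding opoly_def
  proof (intro exI[of _ K] exI[of _ dK] exI[of _ cK] conjI allI ballI)
    show "finite K" using I(1) J(1) by (simp add: K_def)
    show "lin (cK k)" if "k \<in> K" for k
    proof -
      from that obtain i j where ij: "i \<in> I" "j \<in> J" "k = prod_encode (i, j)"
        unfolding K_def by blast
      show ?thesis unfolding cK_def ij(3) prod_encode_inverse fst_conv snd_conv
        by (rule lin_comp[OF li[OF ij(1)] lj[OF ij(2)]])
    qed
    fix z x
    have "F z (G z x) = (\<Sum>i\<in>I. M (z ^ dg i) (c i (\<Sum>j\<in>J. M (z ^ dg' j) (c' j x))))"
      using I(3) J(3) by (simp cong: if_cong)
    also have "\<dots> = (\<Sum>i\<in>I. \<Sum>j\<in>J. M (z ^ (dg i + dg' j)) (c i (c' j x)))"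
      by (intro sum.cong refl) (simp add: lc lM M_sum M_M power_add mult.commute)
    also have "\<dots> = (\<Sum>k\<in>K. M (z ^ dK k) (cK k x))"
      unfolding sumK dK_def cK_def by simp
    finally show "F z (G z x) = (\<Sum>k\<in>K. M (z ^ dK k) (cK k x))" .
    have "A0 (B0 x) = (\<Sum>i\<in>I. if dg i = 0 then c i (\<Sum>j\<in>J. if dg' j = 0 then c' j x else 0) else 0)"
      using I(4) J(4) by (simp cong: if_cong)
    also have "\<dots> = (\<Sum>i\<in>I. \<Sum>j\<in>J. if dg i = 0 \<and> dg' j = 0 then c i (c' j x) else 0)"
      by (intro sum.cong refl) (auto simp: lc l0 if_distrib intro!: sum.cong)
    also have "\<dots> = (\<Sum>k\<in>K. if dK k = 0 then cK k x else 0)"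
      unfolding sumK dK_def cK_def by (simp cong: if_cong)
    finally show "A0 (B0 x) = (\<Sum>k\<in>K. if dK k = 0 then cK k x else 0)" .
    have e1: "A0 (B1 x) = (\<Sum>i\<in>I. \<Sum>j\<in>J. if dg i = 0 \<and> dg' j = 1 then c i (c' j x) else 0)"
    proof -
      have "A0 (B1 x) = (\<Sum>i\<in>I. if dg i = 0 then c i (\<Sum>j\<in>J. if dg' j = 1 then c' j x else 0) else 0)"
        using I(4) J(5) by (simp cong: if_cong)
      also have "\<dots> = (\<Sum>i\<in>I. \<Sum>j\<in>J. if dg i = 0 \<and> dg' j = 1 then c i (c' j x) else 0)"
        by (intro sum.cong refl) (auto simp: lc l0 if_distrib intro!: sum.cong)
      finally show ?thesis .
    qed
    have e2: "A1 (B0 x) = (\<Sum>i\<in>I. \<Sum>j\<in>J. if dg i = 1 \<and> dg' j = 0 then c i (c' j x) else 0)"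
    proof -
      have "A1 (B0 x) = (\<Sum>i\<in>I. if dg i = 1 then c i (\<Sum>j\<in>J. if dg' j = 0 then c' j x else 0) else 0)"
        using I(5) J(4) by (simp cong: if_cong)
      also have "\<dots> = (\<Sum>i\<in>I. \<Sum>j\<in>J. if dg i = 1 \<and> dg' j = 0 then c i (c' j x) else 0)"
        by (intro sum.cong refl) (auto simp: lc l0 if_distrib intro!: sum.cong)
      finally show ?thesis .
    qed
    have "A0 (B1 x) + A1 (B0 x) = (\<Sum>i\<in>I. \<Sum>j\<in>J. (if dg i = 0 \<and> dg' j = 1 then c i (c' j x) else 0) +
                                             (if dg i = 1 \<and> dg' j = 0 then c i (c' j x) else 0))"
      unfolding e1 e2 sum.distrib by simp
    also have "\<dots> = (\<Sum>k\<in>K. if dK k = 1 then cK k x else 0)"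
      unfolding sumK dK_def cK_def
      by (intro sum.cong refl) (auto simp: add_is_1 cong: if_cong)
    finally show "A0 (B1 x) + A1 (B0 x) = (\<Sum>k\<in>K. if dK k = 1 then cK k x else 0)" .
  qed
qed


lemma opoly_pow:
  assumes T: "lin T"
  shows "opoly (\<lambda>z x. ((\<lambda>x. x + M z (T x)) ^^ n) x) (\<lambda>x. x) (\<lambda>x. rs (real n) (T x))"
proof (induction n)
  case 0
  show ?case by (rule opoly_cong[OF opoly_const[OF lin_id]]) simp_all
next
  case (Suc n)
  have f: "opoly (\<lambda>z x. x + M z (T x)) (\<lambda>x. x + 0) (\<lambda>x. 0 + T x)"
    by (rule opoly_add[OF opoly_const[OF lin_id] opoly_lin[OF T]])
  show ?case
    by (rule opoly_cong[OF opoly_comp[OF f Suc.IH]]) (simp_all add: rs_radd add.commute)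
qed

lemma opoly_deriv:
  assumes "opoly F A0 A1"
  shows "((\<lambda>z. cip (F z x) y) has_field_derivative cip (A1 x) y) (at 0)"
    and "(\<lambda>z. cip (F z x) y) holomorphic_on UNIV"
proof -
  obtain I dg c where I: "finite (I::nat set)" "\<forall>i\<in>I. lin (c i)"
    "\<forall>z x. F z x = (\<Sum>i\<in>I. M (z ^ dg i) (c i x))"
    "\<forall>x. A0 x = (\<Sum>i\<in>I. if dg i = 0 then c i x else 0)"
    "\<forall>x. A1 x = (\<Sum>i\<in>I. if dg i = 1 then c i x else 0)"
    by (rule opolyE[OF assms(1)])
  have feq: "(\<lambda>z. cip (F z x) y) = (\<lambda>z. \<Sum>i\<in>I. cip (c i x) y * z ^ dg i)"
    using I(3) by (simp add: cip_sum cip_M)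
  have d: "((\<lambda>z. cip (c i x) y * z ^ dg i) has_field_derivative
           cip (c i x) y * (of_nat (dg i) * (1 * 0 ^ (dg i - Suc 0)))) (at 0)" for i
    by (intro DERIV_cmult DERIV_power DERIV_ident)
  have t: "cip (c i x) y * (of_nat (dg i) * (1 * 0 ^ (dg i - Suc 0))) =
           (if dg i = 1 then cip (c i x) y else 0)" for i
    by (cases "dg i") (auto simp: power_0_left)
  have "cip (A1 x) y = (\<Sum>i\<in>I. cip (if dg i = 1 then c i x else 0) y)"
    using I(5) by (simp add: cip_sum)
  also have "\<dots> = (\<Sum>i\<in>I. if dg i = 1 then cip (c i x) y else 0)"
    by (rule sum.cong) auto
  finally have "cip (A1 x) y = (\<Sum>i\<in>I. if dg i = 1 then cip (c i x) y else 0)" .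
  moreover have D: "((\<lambda>z. \<Sum>i\<in>I. cip (c i x) y * z ^ dg i) has_field_derivative
      (\<Sum>i\<in>I. cip (c i x) y * (of_nat (dg i) * (1 * 0 ^ (dg i - Suc 0))))) (at 0)"
    by (rule DERIV_sum) (rule d)
  moreover have "(\<Sum>i\<in>I. cip (c i x) y * (of_nat (dg i) * (1 * 0 ^ (dg i - Suc 0)))) =
      (\<Sum>i\<in>I. if dg i = 1 then cip (c i x) y else 0)"
    by (rule sum.cong[OF refl t])
  ultimately have "((\<lambda>z. \<Sum>i\<in>I. cip (c i x) y * z ^ dg i) has_field_derivative cip (A1 x) y) (at 0)"
    by simp
  then show "((\<lambda>z. cip (F z x) y) has_field_derivative cip (A1 x) y) (at 0)"
    by (simp add: feq)
  show "(\<lambda>z. cip (F z x) y) holomorphic_on UNIV"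
    unfolding feq by (intro holomorphic_intros)
qed

lemma opoly_cauchy:
  assumes "opoly F A0 A1" "r > 0" "\<And>z. cmod z = r \<Longrightarrow> cmod (cip (F z x) y) \<le> B"
  shows "cmod (cip (A1 x) y) \<le> B / r"
proof -
  let ?f = "\<lambda>z. cip (F z x) y"
  have h: "?f holomorphic_on UNIV" by (rule opoly_deriv(2)[OF assms(1)])
  have "cmod ((deriv ^^ 1) ?f 0) \<le> fact 1 * B / r ^ 1"
  proof (rule Cauchy_inequality)
    show "?f holomorphic_on ball 0 r" using h by (rule holomorphic_on_subset) simp
    show "continuous_on (cball 0 r) ?f"
      using holomorphic_on_imp_continuous_on[OF h] by (rule continuous_on_subset) simp
  qed (use assms in auto)
  moreover have "deriv ?f 0 = cip (A1 x) y"
    by (rule DERIV_imp_deriv[OF opoly_deriv(1)[OF assms(1)]])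
  ultimately show ?thesis by simp
qed

end

context qhs
begin

lemma quad_neg: fixes a b t :: real assumes "b \<ge> 0" "a \<noteq> 0" "t = - a / (b + 1)" shows "t * a + t^2 / 2 * b < 0"
proof -
  have tb: "t * (b + 1) = - a" using assms by simp
  have "(t * a + t^2 / 2 * b) * (b + 1)^2 = (t * (b + 1)) * a * (b + 1) + (t * (b + 1))^2 / 2 * b"
    by (simp add: power2_eq_square algebra_simps)
  also have "\<dots> = - (a^2 * (b + 2)) / 2" unfolding tb by (simp add: power2_eq_square algebra_simps)
  also have "\<dots> < 0" using assms by simp
  finally have "(t * a + t^2 / 2 * b) * (b + 1)^2 < 0" .
  moreover have "(b + 1)^2 > 0" using assms by simp
  ultimately show ?thesis by (simp add: mult_less_0_iff)
qed

definition Phi :: "('h \<Rightarrow> real) \<Rightarrow> 'h \<Rightarrow> real" where "Phi g x = ri x x / 2 - g x"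

lemma ri_self_add: "ri (x + y) (x + y) = ri x x + 2 * ri x y + ri y y"
  by (simp add: ri_add_l ri_add_r ri_sym[of y x])
lemma ri_self_diff: "ri (x - y) (x - y) = ri x x - 2 * ri x y + ri y y"
  by (simp add: ri_diff_l ri_diff_r ri_sym[of y x])

lemma real_riesz:
  fixes g :: "'h \<Rightarrow> real"
  assumes gadd: "\<And>x y. g (x + y) = g x + g y"
    and grs: "\<And>c x. g (rs c x) = c * g x"
    and gb: "\<And>x. \<bar>g x\<bar> \<le> C * nrm x"
  shows "\<exists>z. \<forall>x. g x = ri x z"
proof -
  have gdiff: "g (x - y) = g x - g y" for x y using gadd[of "x - y" y] by simp
  have lowb: "Phi g x \<ge> - (C^2) / 2" for x
  proof -
    have "g x \<le> C * nrm x" using gb[of x] by simp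
    moreover have "0 \<le> (nrm x - C)^2" by simp
    ultimately show ?thesis unfolding Phi_def using nrm_sq[of x]
      by (simp add: power2_eq_square algebra_simps)
  qed
  define m where "m = Inf (range (Phi g))"
  have bdd: "bdd_below (range (Phi g))" using lowb by (intro bdd_belowI[of _ "- (C^2) / 2"]) auto
  have mle: "m \<le> Phi g x" for x unfolding m_def by (rule cInf_lower[OF _ bdd]) simp
  have "\<forall>k. \<exists>x. Phi g x < m + 1 / real (Suc k)"
  proof
    fix k
    have "m < m + 1 / real (Suc k)" by simp
    then show "\<exists>x. Phi g x < m + 1 / real (Suc k)"
      unfolding m_def by (subst (asm) cInf_less_iff[OF _ bdd]) auto
  qed
  then obtain X where X: "\<And>k. Phi g (X k) < m + 1 / real (Suc k)" by metis
  have para: "ri (a - b) (a - b) = 4 * (Phi g a + Phi g b - 2 * Phi g (rs (1/2) (a + b)))" for a b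
    unfolding Phi_def by (simp add: ri_rs_l ri_rs_r grs gadd ri_self_add ri_self_diff algebra_simps) (simp add: field_simps)
  have cdist: "ri (X k - X l) (X k - X l) \<le> 4 * (1 / real (Suc k) + 1 / real (Suc l))" for k l
    using para[of "X k" "X l"] X[of k] X[of l] mle[of "rs (1/2) (X k + X l)"] by simp
  have "\<forall>e>0. \<exists>N. \<forall>k\<ge>N. \<forall>l\<ge>N. qnorm ip (X k - X l) < e"
  proof (intro allI impI)
    fix e :: real assume e: "e > 0"
    obtain N :: nat where N: "8 / e^2 < real N" using reals_Archimedean2 by blast
    have Npos: "real N > 0" using N e by (smt (verit) divide_pos_pos zero_less_power)
    show "\<exists>N. \<forall>k\<ge>N. \<forall>l\<ge>N. qnorm ip (X k - X l) < e"
    proof (intro exI allI impI)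
      fix k l assume kl: "N \<le> k" "N \<le> l"
      have "1 / real (Suc k) \<le> 1 / real N" using kl Npos by (simp add: frac_le)
      moreover have "1 / real (Suc l) \<le> 1 / real N" using kl Npos by (simp add: frac_le)
      ultimately have "ri (X k - X l) (X k - X l) \<le> 8 / real N"
        using cdist[of k l] by simp
      also have "\<dots> < e^2" using N e Npos by (simp add: field_simps)
      finally have "(nrm (X k - X l))^2 < e^2" by (simp add: nrm_sq)
      then have "nrm (X k - X l) < e" using e nrm_nonneg by (simp add: power_less_imp_less_base)
      then show "qnorm ip (X k - X l) < e" by (simp add: nrm_def)
    qed
  qed
  then obtain L where L: "(\<lambda>n. qnorm ip (X n - L)) \<longlonglongrightarrow> 0" using complete by blast
  define d where "d n = nrm (X n - L)" for n
  have d0: "d \<longlonglongrightarrow> 0" using L by (simp add: d_def[abs_def] nrm_def)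
  have close: "Phi g L \<le> Phi g (X n) + (d n * (2 * nrm L + d n)) / 2 + C * d n" for n
  proof -
    have e1: "ri L L - ri (X n) (X n) = - ri (X n - L) (X n + L)"
      by (simp add: ri_diff_l ri_add_r ri_sym[of L "X n"])
    have "\<bar>ri (X n - L) (X n + L)\<bar> \<le> d n * nrm (X n + L)"
      using cauchy_schwarz by (simp add: d_def)
    also have "nrm (X n + L) \<le> 2 * nrm L + d n"
      using nrm_triangle[of "X n - L" "L + L"] nrm_triangle[of L L] by (simp add: d_def)
    then have "d n * nrm (X n + L) \<le> d n * (2 * nrm L + d n)"
      by (simp add: d_def mult_left_mono nrm_nonneg)
    finally have a: "\<bar>ri L L - ri (X n) (X n)\<bar> \<le> d n * (2 * nrm L + d n)" using e1 by simp
    have b: "\<bar>g (X n - L)\<bar> \<le> C * d n" using gb by (simp add: d_def)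
    show ?thesis using a b unfolding Phi_def gdiff by (simp add: abs_le_iff)
  qed
  have lim0: "(\<lambda>n. m + 1 / real (Suc n) + (d n * (2 * nrm L + d n)) / 2 + C * d n) \<longlonglongrightarrow>
             m + 0 + (0 * (2 * nrm L + 0)) / 2 + C * 0"
    by (intro tendsto_intros d0 LIMSEQ_Suc[OF lim_inverse_n']) simp_all
  then have lim: "(\<lambda>n. m + 1 / real (Suc n) + (d n * (2 * nrm L + d n)) / 2 + C * d n) \<longlonglongrightarrow> m"
    by simp
  have ev: "\<exists>N. \<forall>n\<ge>N. Phi g L \<le> m + 1 / real (Suc n) + (d n * (2 * nrm L + d n)) / 2 + C * d n"
  proof (intro exI allI impI)
    fix n :: nat
    show "Phi g L \<le> m + 1 / real (Suc n) + (d n * (2 * nrm L + d n)) / 2 + C * d n"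
      using close[of n] X[of n] by linarith
  qed
  have "Phi g L \<le> m" by (rule LIMSEQ_le_const[OF lim ev])
  then have Lmin: "Phi g L \<le> Phi g x" for x using mle[of x] by simp
  have "g h = ri h L" for h
  proof (rule ccontr)
    assume ne: "g h \<noteq> ri h L"
    define a where "a = ri L h - g h"
    define b where "b = ri h h"
    have a0: "a \<noteq> 0" using ne by (simp add: a_def ri_sym)
    have b0: "b \<ge> 0" by (simp add: b_def ri_nonneg)
    define t where "t = - a / (b + 1)"
    have "Phi g (L + rs t h) - Phi g L = t * a + t^2 / 2 * b"
      unfolding Phi_def a_def b_def
      by (simp add: ri_self_add ri_rs_l ri_rs_r gadd grs power2_eq_square algebra_simps)
    also have "\<dots> < 0" by (rule quad_neg[OF b0 a0 t_def])
    finally show False using Lmin[of "L + rs t h"] by simp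
  qed
  then show ?thesis by blast
qed


lemma quat_riesz:
  fixes f :: "'h \<Rightarrow> quat"
  assumes flin: "\<And>x y q. f (smul x q + y) = f x * q + f y"
    and fb: "\<And>x. \<bar>qRe (f x)\<bar> \<le> C * nrm x"
  shows "\<exists>z. \<forall>x. f x = ip x z"
proof -
  have fadd: "f (x + y) = f x + f y" for x y using flin[of x 1 y] by simp
  have f0: "f 0 = 0" using fadd[of 0 0] by simp
  have fsmul: "f (smul x q) = f x * q" for x q using flin[of x q 0] f0 by simp
  have "\<exists>z. \<forall>x. qRe (f x) = ri x z"
  proof (rule real_riesz)
    show "qRe (f (x + y)) = qRe (f x) + qRe (f y)" for x y by (simp add: fadd)
    show "qRe (f (rs c x)) = c * qRe (f x)" for c x by (simp add: rs_def fsmul)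
    show "\<bar>qRe (f x)\<bar> \<le> C * nrm x" for x by (rule fb)
  qed
  then obtain z where z: "\<And>x. qRe (f x) = ri x z" by blast
  have comp: "qRe (f x * u) = qRe (ip x z * u)" for x u
    using z[of "smul x u"] by (simp add: fsmul ri_def ip_smul_l)
  have "f x = ip x z" for x
  proof (rule quat_eqI)
    show "qRe (f x) = qRe (ip x z)" using z[of x] by (simp add: ri_def)
    show "qI (f x) = qI (ip x z)" using comp[of x "Quat 0 (-1) 0 0"] by simp
    show "qJ (f x) = qJ (ip x z)" using comp[of x "Quat 0 0 (-1) 0"] by simp
    show "qK (f x) = qK (ip x z)" using comp[of x "Quat 0 0 0 (-1)"] by simp
  qed
  then show ?thesis by blast
qed

lemma ip_ext: assumes "\<And>x. ip x a = ip x b" shows "a = b"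
proof -
  have "ip (a - b) (a - b) = 0" by (simp add: ip_diff_r assms)
  then have "a - b = 0" by (rule ip_def0)
  then show ?thesis by simp
qed

lemma adj_exists:
  assumes T: "lin T" and Tb: "\<And>x. nrm (T x) \<le> C * nrm x"
  shows "\<forall>x y. ip (T x) y = ip x (qadjoint ip T y)"
proof -
  have "\<forall>y. \<exists>z. \<forall>x. ip (T x) y = ip x z"
  proof
    fix y
    show "\<exists>z. \<forall>x. ip (T x) y = ip x z"
    proof (rule quat_riesz)
      show "ip (T (smul x q + x')) y = ip (T x) y * q + ip (T x') y" for x x' q
        using T unfolding rlin_def by (simp add: ip_lin)
      show "\<bar>qRe (ip (T x) y)\<bar> \<le> (C * nrm y) * nrm x" for x
      proof -
        have "\<bar>qRe (ip (T x) y)\<bar> \<le> nrm (T x) * nrm y" using cauchy_schwarz by (simp add: ri_def)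
        also have "\<dots> \<le> C * nrm x * nrm y" using Tb[of x] nrm_nonneg[of y] by (rule mult_right_mono)
        finally show ?thesis by (simp add: ac_simps)
      qed
    qed
  qed
  then obtain A where A: "\<And>x y. ip (T x) y = ip x (A y)" by metis
  have "qadjoint ip T = A" unfolding qadjoint_def
  proof (rule the_equality)
    show "\<forall>x y. ip (T x) y = ip x (A y)" using A by blast
    fix A' assume "\<forall>x y. ip (T x) y = ip x (A' y)"
    then show "A' = A" using A by (intro ext ip_ext) metis
  qed
  then show ?thesis using A by simp
qed

end

context qhs
begin

lemma M_adj: "ri a (M w b) = ri (M (cnj w) a) b"
proof -
  have "qcnj (cq w) = cq (cnj w)" by (rule quat_eqI) (simp_all add: qcnj_def)
  then show ?thesis
    by (simp add: ri_def M_def ip_smul_l ip_smul_r qRe_mult_comm)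
qed

lemma addf_diff: fixes f :: "'h \<Rightarrow> 'h" assumes "\<And>x y. f (x + y) = f x + f y" shows "f (x - y) = f x - f y"
  using assms[of "x - y" y] by simp

lemma funpow_addf: fixes f :: "'h \<Rightarrow> 'h" assumes "\<And>x y. f (x + y) = f x + f y" shows "(f ^^ n) (x + y) = (f ^^ n) x + (f ^^ n) y"
  by (induction n) (simp_all add: assms)

lemma funpow_comm: assumes "\<And>x. f (g x) = g (f x)"
  shows "(f ^^ n) ((g ^^ n) x) = ((\<lambda>x. f (g x)) ^^ n) x"
proof -
  have fg: "(f ^^ n) (g x) = g ((f ^^ n) x)" for n x
    by (induction n) (simp_all add: assms)
  show ?thesis
  proof (induction n arbitrary: x)
    case 0 then show ?case by simp
  next
    case (Suc n)
    have "(f ^^ Suc n) ((g ^^ Suc n) x) = f ((f ^^ n) (g ((g ^^ n) x)))" by simp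
    also have "\<dots> = f (g ((f ^^ n) ((g ^^ n) x)))" by (simp add: fg)
    also have "\<dots> = ((\<lambda>x. f (g x)) ^^ Suc n) x" by (simp add: Suc)
    finally show ?case .
  qed
qed

lemma funpow_intertwine: assumes "\<And>x. f (s x) = s (g x)"
  shows "(f ^^ n) (s x) = s ((g ^^ n) x)"
  by (induction n) (simp_all add: assms)

lemma funpow_bound: assumes "\<And>x. nrm (f x) \<le> c * nrm x" "c \<ge> 0"
  shows "nrm ((f ^^ n) x) \<le> c ^ n * nrm x"
proof (induction n)
  case 0 then show ?case by simp
next
  case (Suc n)
  have "nrm ((f ^^ Suc n) x) \<le> c * nrm ((f ^^ n) x)" using assms(1) by simp
  also have "\<dots> \<le> c * (c ^ n * nrm x)" using Suc assms(2) by (rule mult_left_mono)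
  finally show ?case by simp
qed

lemma funpow_near_id:
  assumes add: "\<And>x y. f (x + y) = f x + f y" and b: "\<And>x. nrm (f x - x) \<le> e * nrm x" and e: "e \<ge> 0"
  shows "nrm ((f ^^ n) u - u) \<le> ((1 + e) ^ n - 1) * nrm u"
proof (induction n)
  case 0 then show ?case by simp
next
  case (Suc n)
  define d where "d = (f ^^ n) u - u"
  have fd: "f d = f ((f ^^ n) u) - f u" unfolding d_def by (rule addf_diff[OF add])
  have "(f ^^ Suc n) u - u = d + (f d - d) + (f u - u)"
    using fd by (simp add: d_def algebra_simps)
  then have "nrm ((f ^^ Suc n) u - u) \<le> nrm d + nrm (f d - d) + nrm (f u - u)"
    by (metis nrm_triangle order_trans add_right_mono)
  also have "\<dots> \<le> nrm d + e * nrm d + e * nrm u" using b[of d] b[of u] by simp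
  also have "\<dots> = (1 + e) * nrm d + e * nrm u" by (simp add: algebra_simps)
  also have "\<dots> \<le> (1 + e) * (((1 + e) ^ n - 1) * nrm u) + e * nrm u"
    using Suc e by (simp add: d_def mult_left_mono)
  also have "\<dots> = ((1 + e) ^ Suc n - 1) * nrm u" by (simp add: algebra_simps)
  finally show ?case .
qed

definition Eop :: "complex \<Rightarrow> real \<Rightarrow> ('h \<Rightarrow> 'h) \<Rightarrow> 'h \<Rightarrow> 'h" where
  "Eop a c A x = x + M a (rs c (A x))"

lemma E_add: "lin A \<Longrightarrow> Eop a c A (x + y) = Eop a c A x + Eop a c A y"
  by (simp add: Eop_def lin_add rs_add M_add ac_simps)

lemma E_comm:
  assumes "lin A" "lin B" "\<And>x. A (B x) = B (A x)"
  shows "Eop a c A (Eop b d B x) = Eop b d B (Eop a c A x)"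
proof -
  have k: "M a (rs c (M b (rs d v))) = M b (rs d (M a (rs c v)))" for v
    by (simp add: M_rs rs_rs M_M mult.commute)
  show ?thesis using assms
    by (simp add: Eop_def lin_add lin_M lin_rs M_add rs_add k ac_simps)
qed

lemma E_intertwine:
  assumes "lin S" "\<And>x. A (S x) = S (B x)"
  shows "Eop a c A (S x) = S (Eop a c B x)"
  using assms by (simp add: Eop_def lin_add lin_M lin_rs)

lemma E_bound:
  assumes "\<And>x. nrm (A x) \<le> \<alpha> * nrm x"
  shows "nrm (Eop a c A x) \<le> (1 + cmod a * \<bar>c\<bar> * \<alpha>) * nrm x"
proof -
  have "nrm (Eop a c A x) \<le> nrm x + cmod a * (\<bar>c\<bar> * nrm (A x))"
    unfolding Eop_def using nrm_triangle[of x "M a (rs c (A x))"] by (simp add: nrm_M nrm_rs)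
  also have "\<dots> \<le> nrm x + cmod a * (\<bar>c\<bar> * (\<alpha> * nrm x))"
    using assms[of x] by (simp add: mult_left_mono)
  finally show ?thesis by (simp add: algebra_simps)
qed

lemma E_negsq:
  assumes "lin A"
  shows "Eop a c (\<lambda>x. - A x) (Eop a c A x) = x - M (a * a) (rs (c * c) (A (A x)))"
  using assms by (simp add: Eop_def lin_add lin_M lin_rs lin_minus M_minus rs_minus M_add rs_add M_diff rs_diff M_rs rs_rs M_M)


lemma E_skew:
  assumes T: "lin T" and T': "lin T'" and adj: "\<And>x y. ri (T x) y = ri x (T' y)"
    and comm: "\<And>x. T (T' x) = T' (T x)"
    and bT: "\<And>x. nrm (T x) \<le> \<alpha> * nrm x" and bT': "\<And>x. nrm (T' x) \<le> \<alpha> * nrm x"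
    and a0: "\<alpha> \<ge> 0" and c0: "c \<ge> 0"
  shows "nrm (Eop w c T' (Eop (cnj w) c (\<lambda>x. - T x) x)) \<le> (1 + 5 * (cmod w * c * \<alpha>)^2) * nrm x"
proof -
  define \<beta> where "\<beta> = cmod w * c * \<alpha>"
  have b0: "\<beta> \<ge> 0" using a0 c0 by (simp add: \<beta>_def)
  define v where "v = M w (rs c (T' x)) - M (cnj w) (rs c (T x))"
  define e where "e = M w (rs c (T' (M (cnj w) (rs c (T x)))))"
  have e1: "Eop (cnj w) c (\<lambda>x. - T x) x = x - M (cnj w) (rs c (T x))"
    by (simp add: Eop_def rs_minus M_minus)
  have e2: "M w (rs c (T' (x - M (cnj w) (rs c (T x))))) = M w (rs c (T' x)) - e"
    by (simp add: e_def lin_diff[OF T'] rs_diff M_diff)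
  have G: "Eop w c T' (Eop (cnj w) c (\<lambda>x. - T x) x) = (x + v) - e"
    unfolding e1 by (simp only: Eop_def e2 v_def) (simp add: algebra_simps)
  have "ri x (M w (T' x)) = ri x (M (cnj w) (T x))"
  proof -
    have "ri x (M w (T' x)) = ri (M (cnj w) x) (T' x)" by (rule M_adj)
    also have "\<dots> = ri (T (M (cnj w) x)) x" by (simp add: adj)
    also have "\<dots> = ri x (M (cnj w) (T x))" by (simp add: lin_M[OF T] ri_sym)
    finally show ?thesis .
  qed
  then have xv: "ri x v = 0" by (simp add: v_def ri_diff_r M_rs ri_rs_r)
  have nv: "nrm v \<le> 2 * \<beta> * nrm x"
  proof -
    have "nrm v \<le> nrm (M w (rs c (T' x))) + nrm (M (cnj w) (rs c (T x)))"
      unfolding v_def by (rule nrm_diff)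
    also have "\<dots> = cmod w * c * nrm (T' x) + cmod w * c * nrm (T x)"
      using c0 by (simp add: nrm_M nrm_rs)
    also have "\<dots> \<le> cmod w * c * (\<alpha> * nrm x) + cmod w * c * (\<alpha> * nrm x)"
      using bT[of x] bT'[of x] c0 by (intro add_mono mult_left_mono) simp_all
    finally show ?thesis by (simp add: \<beta>_def algebra_simps)
  qed
  have ne: "nrm e \<le> \<beta>^2 * nrm x"
  proof -
    have "nrm e = cmod w * c * nrm (T' (M (cnj w) (rs c (T x))))"
      using c0 by (simp add: e_def nrm_M nrm_rs)
    also have "\<dots> \<le> cmod w * c * (\<alpha> * nrm (M (cnj w) (rs c (T x))))"
      using bT' c0 by (intro mult_left_mono) simp_all
    also have "\<dots> = cmod w * c * (\<alpha> * (cmod w * c * nrm (T x)))"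
      using c0 by (simp add: nrm_M nrm_rs)
    also have "\<dots> \<le> cmod w * c * (\<alpha> * (cmod w * c * (\<alpha> * nrm x)))"
      using bT[of x] c0 a0 by (intro mult_left_mono) simp_all
    finally show ?thesis by (simp add: \<beta>_def power2_eq_square algebra_simps)
  qed
  have "ri (x + v) (x + v) = ri x x + ri v v"
    using xv by (simp add: ri_self_add)
  also have "\<dots> \<le> (nrm x)^2 + (2 * \<beta> * nrm x)^2"
    using nv nrm_nonneg[of v] by (simp add: nrm_sq[symmetric] power_mono)
  also have "\<dots> = (1 + 4 * \<beta>^2) * (nrm x)^2" by (simp add: power_mult_distrib algebra_simps)
  also have "\<dots> \<le> (1 + 4 * \<beta>^2)^2 * (nrm x)^2"
  proof (rule mult_right_mono)
    have "1 \<le> 1 + 4 * \<beta>^2" by simp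
    then have "(1 + 4 * \<beta>^2) * 1 \<le> (1 + 4 * \<beta>^2) * (1 + 4 * \<beta>^2)"
      by (intro mult_left_mono) simp_all
    then show "1 + 4 * \<beta>^2 \<le> (1 + 4 * \<beta>^2)^2" by (simp add: power2_eq_square)
  qed simp
  also have "\<dots> = ((1 + 4 * \<beta>^2) * nrm x)^2" by (simp add: power_mult_distrib)
  finally have sq: "(nrm (x + v))^2 \<le> ((1 + 4 * \<beta>^2) * nrm x)^2" by (simp only: nrm_sq)
  have nn: "0 \<le> (1 + 4 * \<beta>^2) * nrm x" using nrm_nonneg[of x] by simp
  have nxv: "nrm (x + v) \<le> (1 + 4 * \<beta>^2) * nrm x" by (rule power2_le_imp_le[OF sq nn])
  have "nrm ((x + v) - e) \<le> nrm (x + v) + nrm e" by (rule nrm_diff)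
  also have "\<dots> \<le> (1 + 4 * \<beta>^2) * nrm x + \<beta>^2 * nrm x" using nxv ne by simp
  finally show ?thesis unfolding G \<beta>_def[symmetric] by (simp add: algebra_simps)
qed

end

lemma pow_le_exp: fixes t :: real assumes "t \<ge> 0" shows "(1 + t) ^ n \<le> exp (real n * t)"
proof -
  have "(1 + t) ^ n \<le> exp t ^ n" using assms by (intro power_mono) simp_all
  also have "\<dots> = exp (real n * t)" by (simp add: exp_of_nat_mult)
  finally show ?thesis .
qed

lemma exp_small: fixes t :: real assumes "0 \<le> t" "t \<le> 1" shows "exp t - 1 \<le> 2 * t"
proof -
  have "exp t \<le> 1 + t + t^2" by (rule exp_bound[OF assms])
  moreover have "t * t \<le> t * 1" using assms by (intro mult_left_mono) simp_all
  then have "t^2 \<le> t" by (simp add: power2_eq_square)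
  ultimately show ?thesis by simp
qed

lemma pw3: fixes K :: real assumes "K \<ge> 0" "K \<le> real n" "n > 0"
  shows "(1 + K / real n ^ 2) ^ n \<le> 3"
proof -
  have "(1 + K / real n ^ 2) ^ n \<le> exp (real n * (K / real n ^ 2))"
    using assms by (intro pow_le_exp) simp
  also have "real n * (K / real n ^ 2) = K / real n" using assms by (simp add: power2_eq_square)
  also have "exp (K / real n) \<le> exp 1" using assms by simp
  also have "\<dots> \<le> 3" by (rule exp_le)
  finally show ?thesis .
qed

lemma pwq: fixes Q :: real assumes "Q \<ge> 0" "Q \<le> real n" "n > 0"
  shows "(1 + Q / real n ^ 2) ^ n - 1 \<le> 2 * Q / real n"
proof -
  have "(1 + Q / real n ^ 2) ^ n \<le> exp (real n * (Q / real n ^ 2))"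
    using assms by (intro pow_le_exp) simp
  also have "real n * (Q / real n ^ 2) = Q / real n" using assms by (simp add: power2_eq_square)
  finally have "(1 + Q / real n ^ 2) ^ n - 1 \<le> exp (Q / real n) - 1" by simp
  also have "\<dots> \<le> 2 * (Q / real n)" using assms by (intro exp_small) simp_all
  finally show ?thesis by simp
qed

lemma pwe: fixes a :: real assumes "a \<ge> 0" "n > 0"
  shows "(1 + a / real n) ^ n \<le> exp a"
proof -
  have "(1 + a / real n) ^ n \<le> exp (real n * (a / real n))"
    using assms by (intro pow_le_exp) simp
  also have "real n * (a / real n) = a" using assms by simp
  finally show ?thesis .
qed

lemma numeric:
  fixes r a1 a2 \<sigma> :: real and n :: nat
  assumes r: "r > 0" and a1: "a1 \<ge> 0" and a2: "a2 \<ge> 0" and s: "\<sigma> \<ge> 0"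
    and nl: "1 + 5 * (r * a1)^2 + 5 * (r * a2)^2 + (r * a2)^2 + 2 * (r * a2)^2 * (exp (r * a1) * exp (r * a2)) < real n"
  shows "(1 + 5 * (r * (1 / real n) * a1)^2) ^ n * \<sigma> * (1 + 5 * (r * (1 / real n) * a2)^2) ^ n
      + (1 + r * (1 / real n) * a1) ^ n * \<sigma> * ((1 + (r * (1 / real n) * a2)^2) ^ n - 1) * (1 + r * (1 / real n) * a2) ^ n
      \<le> 10 * \<sigma>"
proof -
  have E0: "exp (r * a1) * exp (r * a2) > 0" by simp
  have sq0: "(r * a1)^2 \<ge> 0" "(r * a2)^2 \<ge> 0" by simp_all
  have n0: "n > 0" using nl sq0 E0
    by (smt (verit) of_nat_0_less_iff zero_le_mult_iff)
  have nr: "real n > 0" using n0 by simp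
  have K1: "5 * (r * a1)^2 \<le> real n" and K2: "5 * (r * a2)^2 \<le> real n"
    and Qn: "(r * a2)^2 \<le> real n"
    and QE: "2 * (r * a2)^2 * (exp (r * a1) * exp (r * a2)) \<le> real n"
    using nl sq0 E0 by (smt (verit) zero_le_mult_iff)+
  have e1: "5 * (r * (1 / real n) * a1)^2 = 5 * (r * a1)^2 / real n ^ 2"
    and e2: "5 * (r * (1 / real n) * a2)^2 = 5 * (r * a2)^2 / real n ^ 2"
    and e3: "(r * (1 / real n) * a2)^2 = (r * a2)^2 / real n ^ 2"
    and e4: "r * (1 / real n) * a1 = (r * a1) / real n"
    and e5: "r * (1 / real n) * a2 = (r * a2) / real n"
    by (simp_all add: power_divide power_mult_distrib)
  have p1: "(1 + 5 * (r * (1 / real n) * a1)^2) ^ n \<le> 3" unfolding e1 by (rule pw3[OF _ K1 n0]) simp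
  have p2: "(1 + 5 * (r * (1 / real n) * a2)^2) ^ n \<le> 3" unfolding e2 by (rule pw3[OF _ K2 n0]) simp
  have p3: "(1 + (r * (1 / real n) * a2)^2) ^ n - 1 \<le> 2 * (r * a2)^2 / real n" unfolding e3 by (rule pwq[OF _ Qn n0]) simp
  have p4: "(1 + r * (1 / real n) * a1) ^ n \<le> exp (r * a1)" unfolding e4 using r a1 n0 by (intro pwe) simp_all
  have p5: "(1 + r * (1 / real n) * a2) ^ n \<le> exp (r * a2)" unfolding e5 using r a2 n0 by (intro pwe) simp_all
  have g1: "(1 + 5 * (r * (1 / real n) * a1)^2) ^ n * \<sigma> * (1 + 5 * (r * (1 / real n) * a2)^2) ^ n \<le> 3 * \<sigma> * 3"
    using p1 p2 s by (intro mult_mono) simp_all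
  have z3: "(1 + (r * (1 / real n) * a2)^2) ^ n - 1 \<ge> 0" by simp
  have "(1 + r * (1 / real n) * a1) ^ n * \<sigma> * ((1 + (r * (1 / real n) * a2)^2) ^ n - 1) * (1 + r * (1 / real n) * a2) ^ n
        \<le> exp (r * a1) * \<sigma> * (2 * (r * a2)^2 / real n) * exp (r * a2)"
    using p3 p4 p5 s z3 r a1 a2 by (intro mult_mono) simp_all
  also have "\<dots> = \<sigma> * ((2 * (r * a2)^2 * (exp (r * a1) * exp (r * a2))) / real n)"
    by (simp add: field_simps)
  also have "\<dots> \<le> \<sigma> * 1" using QE nr s by (intro mult_left_mono) simp_all
  finally show ?thesis using g1 by simp
qed

context qhs
begin

lemma Eop_eq: "Eop a c A = (\<lambda>x. x + M a (rs c (A x)))"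
  by (rule ext) (simp add: Eop_def)

lemma opoly_P:
  assumes N1': "lin N1'" and N2': "lin N2'" and S: "lin S" and n: "n > 0"
  shows "opoly (\<lambda>z x. (Eop z (1 / real n) N1' ^^ n) (S ((Eop z (1 / real n) (\<lambda>x. - N2' x) ^^ n) x)))
                (\<lambda>x. S x) (\<lambda>x. N1' (S x) - S (N2' x))"
proof -
  have l1: "lin (\<lambda>x. rs (1 / real n) (N1' x))" by (rule lin_rsop[OF N1'])
  have l2: "lin (\<lambda>x. rs (1 / real n) (- N2' x))" by (rule lin_rsop[OF lin_neg[OF N2']])
  note p1 = opoly_pow[OF l1, of n]
  note p2 = opoly_pow[OF l2, of n]
  note inner = opoly_comp[OF opoly_const[OF S] p2]
  note outer = opoly_comp[OF p1 inner]
  have rsn: "rs (real n) (rs (1 / real n) v) = v" for v using n by (simp add: rs_rs)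
  show ?thesis
    by (rule opoly_cong[OF outer]) (simp_all add: Eop_eq rsn lin_minus[OF S] lin_zero[OF S] algebra_simps)
qed


lemma P_bound:
  assumes N1: "lin N1" and N1': "lin N1'" and N2: "lin N2" and N2': "lin N2'" and S: "lin S"
    and adj1: "\<And>x y. ri (N1 x) y = ri x (N1' y)" and comm1: "\<And>x. N1 (N1' x) = N1' (N1 x)"
    and adj2: "\<And>x y. ri (N2 x) y = ri x (N2' y)" and comm2: "\<And>x. N2 (N2' x) = N2' (N2 x)"
    and b1: "\<And>x. nrm (N1 x) \<le> \<alpha>1 * nrm x" and b1': "\<And>x. nrm (N1' x) \<le> \<alpha>1 * nrm x"
    and b2: "\<And>x. nrm (N2 x) \<le> \<alpha>2 * nrm x" and b2': "\<And>x. nrm (N2' x) \<le> \<alpha>2 * nrm x"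
    and a1: "\<alpha>1 \<ge> 0" and a2: "\<alpha>2 \<ge> 0"
    and bS: "\<And>x. nrm (S x) \<le> \<sigma> * nrm x" and s0: "\<sigma> \<ge> 0"
    and inter: "\<And>x. N1 (S x) = S (N2 x)" and c0: "c \<ge> 0"
  shows "nrm ((Eop z c N1' ^^ n) (S ((Eop z c (\<lambda>x. - N2' x) ^^ n) x))) \<le>
     ((1 + 5 * (cmod z * c * \<alpha>1)^2) ^ n * \<sigma> * (1 + 5 * (cmod z * c * \<alpha>2)^2) ^ n
      + (1 + cmod z * c * \<alpha>1) ^ n * \<sigma> * ((1 + (cmod z * c * \<alpha>2)^2) ^ n - 1) * (1 + cmod z * c * \<alpha>2) ^ n) * nrm x"
proof -
  define X where "X = Eop z c N1'"
  define Z1 where "Z1 = Eop (cnj z) c (\<lambda>x. - N1 x)"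
  define Z2 where "Z2 = Eop (cnj z) c (\<lambda>x. - N2 x)"
  define Z2' where "Z2' = Eop (cnj z) c N2"
  define Y where "Y = Eop z c (\<lambda>x. - N2' x)"
  define W where "W = (\<lambda>v. Z2 (Z2' v))"
  define k1 where "k1 = 1 + 5 * (cmod z * c * \<alpha>1)^2"
  define k2 where "k2 = 1 + 5 * (cmod z * c * \<alpha>2)^2"
  define q where "q = (cmod z * c * \<alpha>2)^2"
  define h1 where "h1 = 1 + cmod z * c * \<alpha>1"
  define h2 where "h2 = 1 + cmod z * c * \<alpha>2"
  have nN1: "lin (\<lambda>x. - N1 x)" by (rule lin_neg[OF N1])
  have nN2: "lin (\<lambda>x. - N2 x)" by (rule lin_neg[OF N2])
  have nN2': "lin (\<lambda>x. - N2' x)" by (rule lin_neg[OF N2'])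
  have ca: "X (Z1 v) = Z1 (X v)" for v unfolding X_def Z1_def
    by (rule E_comm[OF N1' nN1]) (simp add: lin_minus[OF N1'] comm1)
  have cb: "Z1 (S v) = S (Z2 v)" for v unfolding Z1_def Z2_def
    by (rule E_intertwine[OF S]) (simp add: lin_minus[OF S] inter)
  have cc: "Z2' (Y v) = Y (Z2' v)" for v unfolding Z2'_def Y_def
    by (rule E_comm[OF N2 nN2']) (simp add: lin_minus[OF N2] comm2)
  have cd: "Z2 (Z2' v) = Z2' (Z2 v)" for v unfolding Z2_def Z2'_def
    by (rule E_comm[OF nN2 N2]) (simp add: lin_minus[OF N2])
  have addX: "X (a + b) = X a + X b" for a b unfolding X_def by (rule E_add[OF N1'])
  have addZ2: "Z2 (a + b) = Z2 a + Z2 b" for a b unfolding Z2_def by (rule E_add[OF nN2])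
  have addZ2': "Z2' (a + b) = Z2' a + Z2' b" for a b unfolding Z2'_def by (rule E_add[OF N2])
  have addW: "W (a + b) = W a + W b" for a b unfolding W_def by (simp add: addZ2 addZ2')
  have Rid: "((\<lambda>v. X (Z1 v)) ^^ n) (S (((\<lambda>v. Z2' (Y v)) ^^ n) x)) = (X ^^ n) (S ((W ^^ n) ((Y ^^ n) x)))"
  proof -
    have "((\<lambda>v. X (Z1 v)) ^^ n) (S (((\<lambda>v. Z2' (Y v)) ^^ n) x)) =
          (X ^^ n) ((Z1 ^^ n) (S ((Z2' ^^ n) ((Y ^^ n) x))))"
      by (simp add: funpow_comm[of X Z1, OF ca] funpow_comm[of Z2' Y, OF cc])
    also have "\<dots> = (X ^^ n) (S ((Z2 ^^ n) ((Z2' ^^ n) ((Y ^^ n) x))))"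
      by (simp add: funpow_intertwine[of Z1 S Z2, OF cb])
    also have "\<dots> = (X ^^ n) (S ((W ^^ n) ((Y ^^ n) x)))"
      by (simp add: funpow_comm[of Z2 Z2', OF cd] W_def)
    finally show ?thesis .
  qed
  have k1: "nrm (X (Z1 v)) \<le> k1 * nrm v" for v
    unfolding X_def Z1_def k1_def by (rule E_skew[OF N1 N1' adj1 comm1 b1 b1' a1 c0])
  have adj2': "ri (N2' x) y = ri x (N2 y)" for x y using adj2[of y x] by (simp add: ri_sym)
  have k2: "nrm (Z2' (Y v)) \<le> k2 * nrm v" for v
    using E_skew[OF N2' N2 adj2' comm2[symmetric] b2' b2 a2 c0, of "cnj z" v]
    unfolding Z2'_def Y_def k2_def by simp
  have k10: "k1 \<ge> 0" "k2 \<ge> 0" by (simp_all add: k1_def k2_def)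
  have Rb: "nrm (((\<lambda>v. X (Z1 v)) ^^ n) (S (((\<lambda>v. Z2' (Y v)) ^^ n) x))) \<le> k1 ^ n * \<sigma> * k2 ^ n * nrm x"
  proof -
    have "nrm (((\<lambda>v. X (Z1 v)) ^^ n) (S (((\<lambda>v. Z2' (Y v)) ^^ n) x))) \<le>
          k1 ^ n * nrm (S (((\<lambda>v. Z2' (Y v)) ^^ n) x))"
      by (rule funpow_bound[OF k1 k10(1)])
    also have "\<dots> \<le> k1 ^ n * (\<sigma> * nrm (((\<lambda>v. Z2' (Y v)) ^^ n) x))"
      using bS k10 by (intro mult_left_mono) simp_all
    also have "\<dots> \<le> k1 ^ n * (\<sigma> * (k2 ^ n * nrm x))"
      using funpow_bound[OF k2 k10(2)] k10 s0 by (intro mult_left_mono) simp_all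
    finally show ?thesis by (simp add: ac_simps)
  qed
  have h10: "h1 \<ge> 0" "h2 \<ge> 0" using a1 a2 c0 by (simp_all add: h1_def h2_def)
  have bX: "nrm (X v) \<le> h1 * nrm v" for v
    using E_bound[OF b1', of z c v] c0 unfolding X_def h1_def by simp
  have bY: "nrm (Y v) \<le> h2 * nrm v" for v
    using E_bound[of "\<lambda>x. - N2' x" \<alpha>2 z c v] b2' c0 unfolding Y_def h2_def by (simp add: nrm_minus)
  have Wm: "W v - v = - M (cnj z * cnj z) (rs (c * c) (N2 (N2 v)))" for v
    unfolding W_def Z2_def Z2'_def using E_negsq[OF N2, of "cnj z" c v] by simp
  have bW: "nrm (W v - v) \<le> q * nrm v" for v
  proof -
    have "nrm (W v - v) = cmod z * cmod z * (c * c) * nrm (N2 (N2 v))"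
      using c0 by (simp add: Wm nrm_minus nrm_M nrm_rs norm_mult)
    also have "\<dots> \<le> cmod z * cmod z * (c * c) * (\<alpha>2 * (\<alpha>2 * nrm v))"
    proof (rule mult_left_mono)
      have "nrm (N2 (N2 v)) \<le> \<alpha>2 * nrm (N2 v)" by (rule b2)
      also have "\<dots> \<le> \<alpha>2 * (\<alpha>2 * nrm v)" using b2 a2 by (intro mult_left_mono) simp_all
      finally show "nrm (N2 (N2 v)) \<le> \<alpha>2 * (\<alpha>2 * nrm v)" .
    qed (use c0 in simp)
    finally show ?thesis by (simp add: q_def power2_eq_square ac_simps)
  qed
  have q0: "q \<ge> 0" by (simp add: q_def)
  define u where "u = (Y ^^ n) x"
  have diff: "(X ^^ n) (S u) - (X ^^ n) (S ((W ^^ n) u)) = (X ^^ n) (S (u - (W ^^ n) u))"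
  proof -
    have "(X ^^ n) (S u - S ((W ^^ n) u)) = (X ^^ n) (S u) - (X ^^ n) (S ((W ^^ n) u))"
      by (rule addf_diff[OF funpow_addf[OF addX]])
    then show ?thesis by (simp add: lin_diff[OF S])
  qed
  have qn: "(1 + q) ^ n - 1 \<ge> 0" using q0 by simp
  have uW: "nrm (u - (W ^^ n) u) \<le> ((1 + q) ^ n - 1) * (h2 ^ n * nrm x)"
  proof -
    have "nrm (u - (W ^^ n) u) = nrm ((W ^^ n) u - u)" by (rule nrm_diff_sym)
    also have "\<dots> \<le> ((1 + q) ^ n - 1) * nrm u" by (rule funpow_near_id[OF addW bW q0])
    also have "\<dots> \<le> ((1 + q) ^ n - 1) * (h2 ^ n * nrm x)"
      unfolding u_def using funpow_bound[OF bY h10(2)] qn by (rule mult_left_mono)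
    finally show ?thesis .
  qed
  have Db: "nrm ((X ^^ n) (S u) - (X ^^ n) (S ((W ^^ n) u))) \<le> h1 ^ n * \<sigma> * ((1 + q) ^ n - 1) * h2 ^ n * nrm x"
  proof -
    have "nrm ((X ^^ n) (S (u - (W ^^ n) u))) \<le> h1 ^ n * nrm (S (u - (W ^^ n) u))"
      by (rule funpow_bound[OF bX h10(1)])
    also have "\<dots> \<le> h1 ^ n * (\<sigma> * nrm (u - (W ^^ n) u))"
      using bS h10 by (intro mult_left_mono) simp_all
    also have "\<dots> \<le> h1 ^ n * (\<sigma> * (((1 + q) ^ n - 1) * (h2 ^ n * nrm x)))"
      using uW h10 s0 by (intro mult_left_mono) simp_all
    finally show ?thesis unfolding diff by (simp add: ac_simps)
  qed
  have PR: "(X ^^ n) (S u) = (X ^^ n) (S ((W ^^ n) u)) + ((X ^^ n) (S u) - (X ^^ n) (S ((W ^^ n) u)))"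
    by simp
  have "nrm ((X ^^ n) (S u)) \<le> k1 ^ n * \<sigma> * k2 ^ n * nrm x + h1 ^ n * \<sigma> * ((1 + q) ^ n - 1) * h2 ^ n * nrm x"
    using nrm_triangle[of "(X ^^ n) (S ((W ^^ n) u))" "(X ^^ n) (S u) - (X ^^ n) (S ((W ^^ n) u))"]
      Rb Db unfolding Rid u_def[symmetric] by (simp only: PR[symmetric])
  then show ?thesis
    unfolding u_def X_def Y_def k1_def k2_def h1_def h2_def q_def by (simp add: algebra_simps)
qed


lemma fp_core:
  assumes N1: "lin N1" and N1': "lin N1'" and N2: "lin N2" and N2': "lin N2'" and S: "lin S"
    and adj1: "\<And>x y. ri (N1 x) y = ri x (N1' y)" and comm1: "\<And>x. N1 (N1' x) = N1' (N1 x)"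
    and adj2: "\<And>x y. ri (N2 x) y = ri x (N2' y)" and comm2: "\<And>x. N2 (N2' x) = N2' (N2 x)"
    and b1: "\<And>x. nrm (N1 x) \<le> \<alpha>1 * nrm x" and b1': "\<And>x. nrm (N1' x) \<le> \<alpha>1 * nrm x"
    and b2: "\<And>x. nrm (N2 x) \<le> \<alpha>2 * nrm x" and b2': "\<And>x. nrm (N2' x) \<le> \<alpha>2 * nrm x"
    and a1: "\<alpha>1 \<ge> 0" and a2: "\<alpha>2 \<ge> 0"
    and bS: "\<And>x. nrm (S x) \<le> \<sigma> * nrm x" and s0: "\<sigma> \<ge> 0"
    and inter: "\<And>x. N1 (S x) = S (N2 x)"
  shows "N1' (S x0) = S (N2' x0)"
proof -
  define D where "D = N1' (S x0) - S (N2' x0)"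
  define B where "B y = 2 * (10 * \<sigma> * nrm x0) * nrm y" for y
  have key: "cmod (cip D y) \<le> B y / r" if r: "r > 0" for y r
  proof -
    obtain n :: nat where nl: "1 + 5 * (r * \<alpha>1)^2 + 5 * (r * \<alpha>2)^2 + (r * \<alpha>2)^2 +
        2 * (r * \<alpha>2)^2 * (exp (r * \<alpha>1) * exp (r * \<alpha>2)) < real n"
      using reals_Archimedean2 by blast
    have n0: "n > 0" using nl
      by (smt (verit) exp_gt_zero of_nat_0_less_iff zero_le_mult_iff zero_le_power2)
    let ?c = "1 / real n"
    let ?P = "\<lambda>z x. (Eop z ?c N1' ^^ n) (S ((Eop z ?c (\<lambda>x. - N2' x) ^^ n) x))"
    have op: "opoly ?P (\<lambda>x. S x) (\<lambda>x. N1' (S x) - S (N2' x))"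
      by (rule opoly_P[OF N1' N2' S n0])
    have bnd: "cmod (cip (?P z x0) y) \<le> B y" if z: "cmod z = r" for z
    proof -
      have "nrm (?P z x0) \<le>
         ((1 + 5 * (cmod z * ?c * \<alpha>1)^2) ^ n * \<sigma> * (1 + 5 * (cmod z * ?c * \<alpha>2)^2) ^ n
          + (1 + cmod z * ?c * \<alpha>1) ^ n * \<sigma> * ((1 + (cmod z * ?c * \<alpha>2)^2) ^ n - 1) * (1 + cmod z * ?c * \<alpha>2) ^ n) * nrm x0"
        by (rule P_bound[OF N1 N1' N2 N2' S adj1 comm1 adj2 comm2 b1 b1' b2 b2' a1 a2 bS s0 inter]) simp
      also have "\<dots> \<le> (10 * \<sigma>) * nrm x0"
        unfolding z using numeric[OF r a1 a2 s0 nl] nrm_nonneg[of x0] by (rule mult_right_mono)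
      finally have "nrm (?P z x0) \<le> 10 * \<sigma> * nrm x0" .
      then have "2 * nrm (?P z x0) * nrm y \<le> 2 * (10 * \<sigma> * nrm x0) * nrm y"
        using nrm_nonneg[of y] by (intro mult_right_mono) simp_all
      then have "2 * nrm (?P z x0) * nrm y \<le> B y" by (simp only: B_def)
      then show ?thesis using cip_bound[of "?P z x0" y] by (rule order_trans[rotated])
    qed
    have "cmod (cip (N1' (S x0) - S (N2' x0)) y) \<le> B y / r"
      by (rule opoly_cauchy[OF op r bnd])
    then show ?thesis by (simp add: D_def)
  qed
  have c0: "cip D y = 0" for y
  proof (rule ccontr)
    assume ne: "cip D y \<noteq> 0"
    define c where "c = cmod (cip D y)"
    have cpos: "c > 0" using ne by (simp add: c_def)
    have B0: "B y \<ge> 0" using s0 by (simp add: B_def nrm_nonneg)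
    define r where "r = 2 * (B y + 1) / c"
    have rpos: "r > 0" using cpos B0 by (simp add: r_def)
    have "c \<le> B y / r" using key[OF rpos] by (simp add: c_def)
    also have "\<dots> = B y * c / (2 * (B y + 1))" using cpos B0 by (simp add: r_def field_simps)
    also have "\<dots> < c"
    proof -
      have "B y < 2 * (B y + 1)" using B0 by simp
      then have "B y * c < 2 * (B y + 1) * c" using cpos by simp
      then show ?thesis using B0 by (simp add: field_simps)
    qed
    finally show False by simp
  qed
  have "ri D D = 0" using c0[of D] Re_cip[of D D] by simp
  then have "D = 0" by (rule ri_eq0)
  then show ?thesis by (simp add: D_def)
qed


lemma adj_props:
  assumes T: "lin T" and Tb: "\<And>x. nrm (T x) \<le> C * nrm x" and nT: "qnormal ip T"
  shows "lin (qadjoint ip T)" "\<And>x y. ri (T x) y = ri x (qadjoint ip T y)"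
    "\<And>x. T (qadjoint ip T x) = qadjoint ip T (T x)" "\<And>x. nrm (qadjoint ip T x) = nrm (T x)"
proof -
  define A where "A = qadjoint ip T"
  have adj: "ip (T x) y = ip x (A y)" for x y using adj_exists[OF T Tb] by (simp add: A_def)
  show "lin (qadjoint ip T)" unfolding A_def[symmetric] rlin_def
  proof (intro allI)
    fix y y' q
    show "A (smul y q + y') = smul (A y) q + A y'"
    proof (rule ip_ext)
      fix x
      show "ip x (A (smul y q + y')) = ip x (smul (A y) q + A y')"
        by (simp add: adj[symmetric] ip_add_r ip_smul_r)
    qed
  qed
  show ar: "ri (T x) y = ri x (qadjoint ip T y)" for x y by (simp add: ri_def adj[unfolded A_def])
  show cm: "T (qadjoint ip T x) = qadjoint ip T (T x)" for x
    using nT unfolding qnormal_def by (metis comp_apply)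
  show "nrm (qadjoint ip T x) = nrm (T x)" for x
  proof -
    have "ri (qadjoint ip T x) (qadjoint ip T x) = ri (T (qadjoint ip T x)) x"
      by (rule ar[symmetric])
    also have "\<dots> = ri (qadjoint ip T (T x)) x" by (simp only: cm)
    also have "\<dots> = ri x (qadjoint ip T (T x))" by (rule ri_sym)
    also have "\<dots> = ri (T x) (T x)" by (rule ar[symmetric])
    finally show ?thesis by (simp add: nrm_def2)
  qed
qed

end

theorem mainTheorem8:
  fixes smul :: "'h::ab_group_add \<Rightarrow> quat \<Rightarrow> 'h"
    and ip :: "'h \<Rightarrow> 'h \<Rightarrow> quat"
    and T1 T2 S :: "'h \<Rightarrow> 'h"
  assumes "right_quat_hilbert smul ip"
    and "bounded_right_linear smul ip T1" and "qnormal ip T1"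
    and "bounded_right_linear smul ip T2" and "qnormal ip T2"
    and "bounded_right_linear smul ip S"
    and "T1 \<circ> S = S \<circ> T2"
  shows "qadjoint ip T1 \<circ> S = S \<circ> qadjoint ip T2"
proof -
  interpret qhs smul ip by unfold_locales (rule assms(1))
  have bl: "lin T \<and> (\<exists>C. C \<ge> 0 \<and> (\<forall>x. nrm (T x) \<le> C * nrm x))" if bT: "bounded_right_linear smul ip T" for T
  proof -
    obtain C where C: "\<forall>x. qnorm ip (T x) \<le> C * qnorm ip x" "lin T"
      using bT unfolding bounded_right_linear_def rlin_def by blast
    have "nrm (T x) \<le> max C 0 * nrm x" for x
      using C(1) nrm_nonneg[of x] unfolding nrm_def
      by (metis max.cobounded1 mult_right_mono order_trans)
    then show ?thesis using C(2) by (intro conjI exI[of _ "max C 0"]) auto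
  qed
  obtain a1 where T1: "lin T1" "a1 \<ge> 0" "\<And>x. nrm (T1 x) \<le> a1 * nrm x" using bl[OF assms(2)] by blast
  obtain a2 where T2: "lin T2" "a2 \<ge> 0" "\<And>x. nrm (T2 x) \<le> a2 * nrm x" using bl[OF assms(4)] by blast
  obtain s where S: "lin S" "s \<ge> 0" "\<And>x. nrm (S x) \<le> s * nrm x" using bl[OF assms(6)] by blast
  note A1 = adj_props[OF T1(1) T1(3) assms(3)]
  note A2 = adj_props[OF T2(1) T2(3) assms(5)]
  have inter: "T1 (S x) = S (T2 x)" for x using assms(7) by (metis comp_apply)
  have "qadjoint ip T1 (S x) = S (qadjoint ip T2 x)" for x
    by (rule fp_core[OF T1(1) A1(1) T2(1) A2(1) S(1) A1(2) A1(3) A2(2) A2(3) T1(3) _ T2(3) _ T1(2) T2(2) S(3) S(2) inter])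
       (simp_all add: A1(4) A2(4) T1(3) T2(3))
  then show ?thesis by (simp add: fun_eq_iff)
qed

end
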